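(* Let $\lambda\neq0$ be real and $n,k\ge1$ integers with $n\ge k$. Then $$\sum_{j=0}^{n}\binom{n+k-1}{j}S_{2,\lambda}^{[2]}(n-j+k,2k)\,\beta_{j,\lambda} =(n+k-1)!\Bigg\{\sum_{l=k}^{n}\frac{S_{2,\lambda}^{[2]}(l+k-2,2k-2)}{(l+k-2)!}(-\lambda)^{n-l} +\sum_{j=k}^{n}\sum_{l=k}^{j}\frac{S_{2,\lambda}^{[2]}(l+k-2,2k-2)\,\beta_{n-j,\lambda}\,(-\lambda)^{j-l+1}}{(l+k-2)!\,(n-j)!}\Bigg\}.$$
   Context: For real $\lambda\neq0$, $(x)_{0,\lambda}=1$, $(x)_{n,\lambda}=x(x-\lambda)\cdots(x-(n-1)\lambda)$ for $n\ge1$; $e_{\lambda}(t)=\sum_{k\ge0}(1)_{k,\lambda}\frac{t^k}{k!}=(1+\lambda t)^{1/\lambda}$ (formal power series). The $2$-truncated degenerate Stirling numbers of the second kind: for $k\ge0$, $\frac{1}{k!}(e_\lambda(t)-1-t)^k=\sum_{n\ge 2k}S^{[2]}_{2,\lambda}(n,2k)\frac{t^n}{n!}$, with $S^{[2]}_{2,\lambda}(n,2k)=0$ for $0\le n<2k$ (so $S^{[2]}_{2,\lambda}(n,0)=1$ if $n=0$ and $0$ otherwise). The degenerate Bernoulli numbers: $\frac{t}{e_\lambda(t)-1}=\sum_{n\ge0}\beta_{n,\lambda}\frac{t^n}{n!}$. *)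

theory Defs
  imports "HOL-Computational_Algebra.Formal_Power_Series"
begin

definition dfall :: "real \<Rightarrow> real \<Rightarrow> nat \<Rightarrow> real" where
  "dfall lam x n = (\<Prod>i<n. x - real i * lam)"

definition deg_exp :: "real \<Rightarrow> real fps" where
  "deg_exp lam = Abs_fps (\<lambda>k. dfall lam 1 k / fact k)"

(* 2-truncated degenerate Stirling numbers of the second kind S^{[2]}_{2,lambda}(n, m),
   defined for even second argument m = 2k by
   (1/k!) (e_lambda(t) - 1 - t)^k = sum_n S(n,2k) t^n/n!  *)
definition trunc_stirling2 :: "real \<Rightarrow> nat \<Rightarrow> nat \<Rightarrow> real" where
  "trunc_stirling2 lam n m =
     fact n * fps_nth ((deg_exp lam - 1 - fps_X) ^ (m div 2) / fps_const (fact (m div 2))) n"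

definition deg_bernoulli :: "real \<Rightarrow> nat \<Rightarrow> real" where
  "deg_bernoulli lam n = fact n * fps_nth (fps_X / (deg_exp lam - 1)) n"

end

theory Submission
  imports Defs
begin
unbundle fps_syntax

lemma div_const_fps: "(f :: real fps) / fps_const c = fps_const (inverse c) * f"
  proof (cases "c = 0")
  case False
  have "f / fps_const c = f * inverse (fps_const c)" by (rule fps_divide_unit) (simp add: False)
  also have "\<dots> = fps_const (inverse c) * f" by (metis fps_const_inverse mult.commute)
  finally show ?thesis .
next
  case True then show ?thesis by simp
qed

lemma pow_zero_low:
  fixes F :: "real fps"
  assumes "F $ 0 = 0" "F $ 1 = 0"
  shows "m < 2 * p \<Longrightarrow> (F ^ p) $ m = 0"
proof (induction p arbitrary: m)
  case 0 then show ?case by simp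
next
  case (Suc p)
  have "(F ^ Suc p) $ m = (\<Sum>i=0..m. F $ i * (F ^ p) $ (m - i))"
    by (simp add: fps_mult_nth)
  also have "\<dots> = 0"
  proof (rule sum.neutral, intro ballI)
    fix i assume "i \<in> {0..m}"
    show "F $ i * (F ^ p) $ (m - i) = 0"
    proof (cases "i \<le> 1")
      case True then have "i = 0 \<or> i = 1" by auto
      then show ?thesis using assms by auto
    next
      case False then have "m - i < 2 * p" using Suc.prems \<open>i \<in> {0..m}\<close> by auto
      then show ?thesis using Suc.IH by simp
    qed
  qed
  finally show ?case .
qed

lemma sum_zero_low:
  fixes f :: "nat \<Rightarrow> real"
  assumes "\<And>i. i < c \<Longrightarrow> f i = 0"
  shows "(\<Sum>i=0..m. f i) = (\<Sum>i=c..m. f i)"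
  by (rule sum.mono_neutral_right) (auto simp: assms)

lemma sum_reindex_k:
  fixes f :: "nat \<Rightarrow> real"
  assumes "k \<ge> 1" "m \<ge> k"
  shows "(\<Sum>l=k..m. f (l + k - 2)) = (\<Sum>i=2*k-2..m+k-2. f i)"
  by (rule sum.reindex_bij_witness[of _ "\<lambda>i. i + 2 - k" "\<lambda>l. l + k - 2"]) (use assms in auto)

lemma deriv_E: "(1 + fps_const lam * fps_X) * fps_deriv (deg_exp lam) = deg_exp lam"
proof (rule fps_ext)
  fix n
  have D: "fps_deriv (deg_exp lam) $ m = dfall lam 1 m * (1 - real m * lam) / fact m" for m
  proof -
    have "dfall lam 1 (Suc m) = dfall lam 1 m * (1 - real m * lam)"
      by (simp add: dfall_def)
    then show ?thesis
      by (simp add: deg_exp_def fact_Suc field_simps del: of_nat_Suc)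
  qed
  show "((1 + fps_const lam * fps_X) * fps_deriv (deg_exp lam)) $ n = deg_exp lam $ n"
  proof (cases n)
    case 0 then show ?thesis by (simp add: D deg_exp_def dfall_def distrib_right)
  next
    case (Suc m)
    have "((1 + fps_const lam * fps_X) * fps_deriv (deg_exp lam)) $ n
        = fps_deriv (deg_exp lam) $ n + lam * fps_deriv (deg_exp lam) $ m"
      by (simp add: distrib_right mult.assoc Suc)
    also have "\<dots> = dfall lam 1 n / fact n"
    proof -
      have ds: "dfall lam 1 (Suc m) = dfall lam 1 m * (1 - real m * lam)"
        by (simp add: dfall_def)
      have fp: "fact m > (0::real)" by simp
      show ?thesis unfolding D Suc ds using fp
        by (simp add: fact_Suc field_simps del: of_nat_Suc)
    qed
    finally show ?thesis by (simp add: deg_exp_def)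
  qed
qed


theorem theorem6:
  fixes lam :: real and n k :: nat
  assumes "lam \<noteq> 0" and "k \<ge> 1" and "n \<ge> 1" and "n \<ge> k"
  shows "(\<Sum>j=0..n. real ((n + k - 1) choose j) * trunc_stirling2 lam (n - j + k) (2 * k)
            * deg_bernoulli lam j)
       = fact (n + k - 1) *
         ((\<Sum>l=k..n. trunc_stirling2 lam (l + k - 2) (2 * k - 2) / fact (l + k - 2) * (- lam) ^ (n - l))
          + (\<Sum>j=k..n. \<Sum>l=k..j. trunc_stirling2 lam (l + k - 2) (2 * k - 2) * deg_bernoulli lam (n - j)
                 * (- lam) ^ (j - l + 1) / (fact (l + k - 2) * fact (n - j))))"
proof -
  define E where "E = deg_exp lam"
  define F where "F = E - 1 - fps_X"
  define H where "H = fps_const (inverse (fact k)) * F ^ k"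
  define G where "G = fps_const (inverse (fact (k - 1))) * F ^ (k - 1)"
  define B where "B = fps_X / (E - 1)"
  define I where "I = Abs_fps (\<lambda>i. (- lam) ^ i)"
  define U where "U = 1 + fps_const lam * fps_X"
  define N where "N = n + k - 1"
  define M where "M = n + k - 2"
  have NM: "N = Suc M" using assms unfolding N_def M_def by simp
  have E0: "E $ 0 = 1" and E1: "E $ 1 = 1" by (simp_all add: E_def deg_exp_def dfall_def)
  have F0: "F $ 0 = 0" and F1: "F $ 1 = 0" using E0 E1 by (simp_all add: F_def)
  have Hk: "trunc_stirling2 lam m (2 * k) = fact m * H $ m" for m
    by (simp add: trunc_stirling2_def div_const_fps H_def F_def E_def)
  have k2: "(2 * k - 2) div 2 = k - 1" by simp
  have Gk: "trunc_stirling2 lam m (2 * k - 2) = fact m * G $ m" for m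
    unfolding trunc_stirling2_def k2 by (simp add: div_const_fps G_def F_def E_def)
  have Bk: "deg_bernoulli lam j = fact j * B $ j" for j
    by (simp add: deg_bernoulli_def B_def E_def)
  have Hz: "H $ m = 0" if "m < 2 * k" for m
    using pow_zero_low[OF F0 F1 that] by (simp add: H_def)
  have Gz: "G $ m = 0" if "m < 2 * k - 2" for m
    using pow_zero_low[OF F0 F1, of m "k - 1"] that by (simp add: G_def right_diff_distrib')
  have EB: "B * (E - 1) = fps_X"
  proof -
    have ne: "E - 1 \<noteq> 0"
    proof
      assume "E - 1 = 0" then have "(E - 1) $ 1 = 0" by simp
      then show False using E1 by simp
    qed
    have "subdegree (E - 1) \<le> 1" by (rule subdegree_leI) (use E1 in \<open>simp add: One_nat_def\<close>)
    then show ?thesis unfolding B_def by (intro fps_times_divide_eq[OF ne]) simp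
  qed
  have II: "I * U = 1"
  proof (rule fps_ext)
    fix m
    have "I * U = I + fps_const lam * (fps_X * I)" by (simp add: U_def algebra_simps)
    then show "(I * U) $ m = 1 $ m"
      by (cases m) (simp_all add: I_def)
  qed
  have dF: "fps_deriv F = fps_deriv E - 1" by (simp add: F_def)
  have dH: "fps_deriv H = G * (fps_deriv E - 1)"
  proof -
    obtain p where p: "k = Suc p" using assms by (cases k) auto
    have c: "inverse (fact (Suc p)) * of_nat (Suc p) = (inverse (fact p) :: real)"
      by (simp add: fact_Suc del: of_nat_Suc)
    have "fps_deriv H = fps_const (inverse (fact (Suc p))) * (fps_const (of_nat (Suc p)) * fps_deriv F * F ^ p)"
      unfolding H_def p by (simp only: fps_deriv_mult_const_left fps_deriv_power diff_Suc_1)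
    also have "\<dots> = fps_const (inverse (fact (Suc p)) * of_nat (Suc p)) * F ^ p * fps_deriv F"
      by (simp only: fps_const_mult[symmetric] mult.assoc mult.commute[of "fps_deriv F"])
    also have "\<dots> = G * (fps_deriv E - 1)"
      unfolding c G_def p dF by simp
    finally show ?thesis .
  qed
  have UH: "U * fps_deriv H = G * (E - 1 - fps_const lam * fps_X)"
  proof -
    have "U * fps_deriv H = G * (U * fps_deriv E) - G * U" by (simp add: dH algebra_simps)
    also have "\<dots> = G * E - G * U" using deriv_E[of lam] by (simp add: U_def E_def)
    also have "\<dots> = G * (E - 1 - fps_const lam * fps_X)" by (simp add: U_def algebra_simps)
    finally show ?thesis .
  qed
  have key: "fps_deriv H * B = fps_X * G * I - fps_const lam * (fps_X * G * I * B)"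
  proof -
    have "fps_deriv H * B = (I * U) * fps_deriv H * B" by (simp add: II)
    also have "\<dots> = I * (G * (B * (E - 1)) - fps_const lam * fps_X * G * B)"
      by (simp add: mult.assoc UH algebra_simps)
    also have "\<dots> = fps_X * G * I - fps_const lam * (fps_X * G * I * B)"
      by (simp only: EB) (simp add: algebra_simps)
    finally show ?thesis .
  qed

  have IN: "I $ i = (- lam) ^ i" for i by (simp add: I_def)
  have C1: "(fps_deriv H * B) $ N = (fps_X * G * I) $ N - lam * (fps_X * G * I * B) $ N"
    by (simp add: key)
  have C2: "(fps_X * G * I) $ N = (\<Sum>i=0..M. G $ i * (- lam) ^ (M - i))"
  proof -
    have "(fps_X * G * I) $ N = (G * I) $ M" by (simp add: NM mult.assoc)
    then show ?thesis by (simp add: fps_mult_nth IN)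
  qed
  have C3: "(fps_X * G * I * B) $ N = (\<Sum>a=0..M. (\<Sum>i=0..a. G $ i * (- lam) ^ (a - i) * B $ (M - a)))"
  proof -
    have "fps_X * G * I * B = fps_X * ((G * I) * B)" by (simp add: mult.assoc)
    then have "(fps_X * G * I * B) $ N = ((G * I) * B) $ M" by (simp only: NM fps_X_mult_nth) simp
    then show ?thesis by (simp add: fps_mult_nth IN sum_distrib_right)
  qed
  have C0: "(fps_deriv H * B) $ N = (\<Sum>j=0..N. B $ j * (of_nat (N - j + 1) * H $ (N - j + 1)))"
    by (simp add: mult.commute[of "fps_deriv H" B] fps_mult_nth)
  have L: "(\<Sum>j=0..n. real ((n + k - 1) choose j) * trunc_stirling2 lam (n - j + k) (2 * k)
            * deg_bernoulli lam j) = fact N * (fps_deriv H * B) $ N"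
  proof -
    have "(\<Sum>j=0..n. real ((n + k - 1) choose j) * trunc_stirling2 lam (n - j + k) (2 * k)
            * deg_bernoulli lam j) = (\<Sum>j=0..n. fact N * (B $ j * (of_nat (N - j + 1) * H $ (N - j + 1))))"
    proof (rule sum.cong[OF refl])
      fix j assume j: "j \<in> {0..n}"
      then have jN: "j \<le> N" and e: "n - j + k = Suc (N - j)" using assms by (auto simp: N_def)
      have b: "fact j * fact (N - j) * real (N choose j) = fact N"
        using binomial_fact_lemma[OF jN] by (metis of_nat_fact of_nat_mult)
      show "real ((n + k - 1) choose j) * trunc_stirling2 lam (n - j + k) (2 * k) * deg_bernoulli lam j
          = fact N * (B $ j * (of_nat (N - j + 1) * H $ (N - j + 1)))"
        unfolding Hk Bk e N_def[symmetric] b[symmetric]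
        by (simp add: fact_Suc algebra_simps del: of_nat_Suc)
    qed
    also have "\<dots> = (\<Sum>j=0..N. fact N * (B $ j * (of_nat (N - j + 1) * H $ (N - j + 1))))"
    proof (rule sum.mono_neutral_left)
      show "{0..n} \<subseteq> {0..N}" using assms by (auto simp: N_def)
      show "\<forall>i\<in>{0..N} - {0..n}. fact N * (B $ i * (of_nat (N - i + 1) * H $ (N - i + 1))) = 0"
        using assms by (auto simp: N_def intro!: Hz)
    qed simp
    also have "\<dots> = fact N * (fps_deriv H * B) $ N" by (simp add: C0 sum_distrib_left)
    finally show ?thesis .
  qed
  have T1: "(\<Sum>l=k..n. trunc_stirling2 lam (l + k - 2) (2 * k - 2) / fact (l + k - 2) * (- lam) ^ (n - l))
      = (fps_X * G * I) $ N"
  proof -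
    have "(\<Sum>l=k..n. trunc_stirling2 lam (l + k - 2) (2 * k - 2) / fact (l + k - 2) * (- lam) ^ (n - l))
       = (\<Sum>l=k..n. (\<lambda>i. G $ i * (- lam) ^ (M - i)) (l + k - 2))"
    proof (rule sum.cong[OF refl])
      fix l assume l: "l \<in> {k..n}"
      then have "M - (l + k - 2) = n - l" using assms by (auto simp: M_def)
      then show "trunc_stirling2 lam (l + k - 2) (2 * k - 2) / fact (l + k - 2) * (- lam) ^ (n - l)
          = (\<lambda>i. G $ i * (- lam) ^ (M - i)) (l + k - 2)" by (simp add: Gk)
    qed
    also have "\<dots> = (\<Sum>i=2*k-2..M. G $ i * (- lam) ^ (M - i))"
      unfolding M_def by (rule sum_reindex_k) (use assms in auto)
    also have "\<dots> = (\<Sum>i=0..M. G $ i * (- lam) ^ (M - i))"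
      by (rule sum_zero_low[symmetric]) (simp add: Gz)
    finally show ?thesis by (simp add: C2)
  qed
  define g where "g a = (\<Sum>i=0..a. G $ i * (- lam) ^ (a - i) * B $ (M - a))" for a
  have T2: "(\<Sum>j=k..n. \<Sum>l=k..j. trunc_stirling2 lam (l + k - 2) (2 * k - 2) * deg_bernoulli lam (n - j)
                 * (- lam) ^ (j - l + 1) / (fact (l + k - 2) * fact (n - j)))
      = - lam * (fps_X * G * I * B) $ N"
  proof -
    have "(\<Sum>j=k..n. \<Sum>l=k..j. trunc_stirling2 lam (l + k - 2) (2 * k - 2) * deg_bernoulli lam (n - j)
                 * (- lam) ^ (j - l + 1) / (fact (l + k - 2) * fact (n - j)))
        = (\<Sum>j=k..n. - lam * g (j + k - 2))"
    proof (rule sum.cong[OF refl])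
      fix j assume j: "j \<in> {k..n}"
      have "(\<Sum>l=k..j. trunc_stirling2 lam (l + k - 2) (2 * k - 2) * deg_bernoulli lam (n - j)
                 * (- lam) ^ (j - l + 1) / (fact (l + k - 2) * fact (n - j)))
          = (\<Sum>l=k..j. - lam * (\<lambda>i. G $ i * (- lam) ^ ((j + k - 2) - i) * B $ (M - (j + k - 2))) (l + k - 2))"
      proof (rule sum.cong[OF refl])
        fix l assume l: "l \<in> {k..j}"
        then have e1: "(j + k - 2) - (l + k - 2) = j - l" and e2: "M - (j + k - 2) = n - j"
          and e3: "j - l + 1 = Suc (j - l)"
          using assms j by (auto simp: M_def)
        show "trunc_stirling2 lam (l + k - 2) (2 * k - 2) * deg_bernoulli lam (n - j)
                 * (- lam) ^ (j - l + 1) / (fact (l + k - 2) * fact (n - j))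
          = - lam * (\<lambda>i. G $ i * (- lam) ^ ((j + k - 2) - i) * B $ (M - (j + k - 2))) (l + k - 2)"
          unfolding e1 e2 e3 Gk Bk by (simp add: field_simps)
      qed
      also have "\<dots> = - lam * (\<Sum>i=2*k-2..j+k-2. G $ i * (- lam) ^ ((j + k - 2) - i) * B $ (M - (j + k - 2)))"
        by (subst sum_reindex_k[symmetric]) (use assms j in \<open>auto simp: sum_distrib_left\<close>)
      also have "\<dots> = - lam * g (j + k - 2)"
        unfolding g_def by (subst sum_zero_low[where c="2*k-2"]) (auto simp: Gz)
      finally show "(\<Sum>l=k..j. trunc_stirling2 lam (l + k - 2) (2 * k - 2) * deg_bernoulli lam (n - j)
                 * (- lam) ^ (j - l + 1) / (fact (l + k - 2) * fact (n - j))) = - lam * g (j + k - 2)" .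
    qed
    also have "\<dots> = - lam * (\<Sum>j=k..n. g (j + k - 2))" by (simp add: sum_distrib_left)
    also have "(\<Sum>j=k..n. g (j + k - 2)) = (\<Sum>a=2*k-2..M. g a)"
      unfolding M_def by (rule sum_reindex_k) (use assms in auto)
    also have "\<dots> = (\<Sum>a=0..M. g a)"
      by (rule sum_zero_low[symmetric]) (auto simp: g_def Gz intro!: sum.neutral)
    finally show ?thesis by (simp add: C3 g_def)
  qed
  have fin: "fact N * (fps_deriv H * B) $ N = fact N * ((fps_X * G * I) $ N + - lam * (fps_X * G * I * B) $ N)"
    by (simp only: C1 diff_conv_add_uminus mult_minus_left)
  have fN: "fact (n + k - 1) = (fact N :: real)" by (simp add: N_def)
  show ?thesis unfolding L T1 T2 fN by (rule fin)
qed
end
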